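(* Let $\Gamma$ be a primitive strongly regular graph. Then $E(\Gamma)=E(\bar\Gamma)$ if and only if either $\Gamma$ is a conference graph, or $\Gamma$ has $OA(n,m)$ parameters, i.e. parameters $(n^2, m(n-1), m^2-3m+n, m(m-1))$, for some positive integers $n,m$ with $m\notin\{n,n+1\}$. Moreover, if $E(\Gamma)=E(\bar\Gamma)$ and $\Gamma$ is not a conference graph, then $\Gamma$ and $\bar\Gamma$ are not isospectral.
   Context: A strongly regular graph with parameters $(n,k,e,d)$ is a $k$-regular simple graph on $n$ vertices, neither complete nor edgeless, in which adjacent vertices have $e$ common neighbours and distinct non-adjacent vertices have $d$ common neighbours; it is primitive if it and its complement $\bar\Gamma$ are both connected. A conference graph is a strongly regular graph with parameters $(4t+1,2t,t-1,t)$. The energy $E$ is the sum of the absolute values of the adjacency eigenvalues (with multiplicity); isospectral means equal adjacency spectra with multiplicities. *)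

theory Defs
  imports "Jordan_Normal_Form.Char_Poly" "HOL-Computational_Algebra.Fundamental_Theorem_Algebra"
begin

text \<open>A graph on the vertex set {0..<N} is given by an adjacency relation E.\<close>

definition simple_graph :: "nat \<Rightarrow> (nat \<Rightarrow> nat \<Rightarrow> bool) \<Rightarrow> bool" where
  "simple_graph N E \<longleftrightarrow> (\<forall>i<N. \<forall>j<N. E i j = E j i) \<and> (\<forall>i<N. \<not> E i i)"

definition compl_graph :: "(nat \<Rightarrow> nat \<Rightarrow> bool) \<Rightarrow> nat \<Rightarrow> nat \<Rightarrow> bool" where
  "compl_graph E = (\<lambda>i j. i \<noteq> j \<and> \<not> E i j)"

definition graph_connected :: "nat \<Rightarrow> (nat \<Rightarrow> nat \<Rightarrow> bool) \<Rightarrow> bool" where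
  "graph_connected N E \<longleftrightarrow>
     (\<forall>i<N. \<forall>j<N. (\<lambda>x y. x < N \<and> y < N \<and> E x y)\<^sup>*\<^sup>* i j)"

definition neighbours :: "nat \<Rightarrow> (nat \<Rightarrow> nat \<Rightarrow> bool) \<Rightarrow> nat \<Rightarrow> nat set" where
  "neighbours N E i = {j. j < N \<and> E i j}"

definition strongly_regular ::
  "nat \<Rightarrow> (nat \<Rightarrow> nat \<Rightarrow> bool) \<Rightarrow> nat \<Rightarrow> nat \<Rightarrow> nat \<Rightarrow> nat \<Rightarrow> bool" where
  "strongly_regular N E n k e d \<longleftrightarrow>
     simple_graph N E \<and> n = N \<and>
     (\<forall>i<N. card (neighbours N E i) = k) \<and>
     \<not> (\<forall>i<N. \<forall>j<N. i \<noteq> j \<longrightarrow> E i j) \<and>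
     \<not> (\<forall>i<N. \<forall>j<N. \<not> E i j) \<and>
     (\<forall>i<N. \<forall>j<N. E i j \<longrightarrow> card (neighbours N E i \<inter> neighbours N E j) = e) \<and>
     (\<forall>i<N. \<forall>j<N. i \<noteq> j \<and> \<not> E i j \<longrightarrow> card (neighbours N E i \<inter> neighbours N E j) = d)"

definition is_srg :: "nat \<Rightarrow> (nat \<Rightarrow> nat \<Rightarrow> bool) \<Rightarrow> bool" where
  "is_srg N E \<longleftrightarrow> (\<exists>k e d. strongly_regular N E N k e d)"

definition primitive_srg :: "nat \<Rightarrow> (nat \<Rightarrow> nat \<Rightarrow> bool) \<Rightarrow> bool" where
  "primitive_srg N E \<longleftrightarrow> is_srg N E \<and> graph_connected N E \<and> graph_connected N (compl_graph E)"

definition conference_graph :: "nat \<Rightarrow> (nat \<Rightarrow> nat \<Rightarrow> bool) \<Rightarrow> bool" where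
  "conference_graph N E \<longleftrightarrow> (\<exists>t::nat. t \<ge> 1 \<and> strongly_regular N E (4*t+1) (2*t) (t-1) t)"

text \<open>OA(n,m) parameters (n^2, m(n-1), m^2-3m+n, m(m-1)); the third parameter is computed in int.\<close>
definition has_OA_params :: "nat \<Rightarrow> (nat \<Rightarrow> nat \<Rightarrow> bool) \<Rightarrow> nat \<Rightarrow> nat \<Rightarrow> bool" where
  "has_OA_params N E n m \<longleftrightarrow>
     (\<exists>e. int e = int m ^ 2 - 3 * int m + int n \<and>
          strongly_regular N E (n^2) (m*(n-1)) e (m*(m-1)))"

definition adj_matrix :: "nat \<Rightarrow> (nat \<Rightarrow> nat \<Rightarrow> bool) \<Rightarrow> complex mat" where
  "adj_matrix N E = mat N N (\<lambda>(i,j). if E i j then 1 else 0)"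

definition adj_spectrum :: "nat \<Rightarrow> (nat \<Rightarrow> nat \<Rightarrow> bool) \<Rightarrow> complex multiset" where
  "adj_spectrum N E = proots (char_poly (adj_matrix N E))"

definition energy :: "nat \<Rightarrow> (nat \<Rightarrow> nat \<Rightarrow> bool) \<Rightarrow> real" where
  "energy N E = (\<Sum>x\<in>#adj_spectrum N E. cmod x)"

definition isospectral :: "nat \<Rightarrow> (nat \<Rightarrow> nat \<Rightarrow> bool) \<Rightarrow> (nat \<Rightarrow> nat \<Rightarrow> bool) \<Rightarrow> bool" where
  "isospectral N E F \<longleftrightarrow> adj_spectrum N E = adj_spectrum N F"

end

theory Submission
  imports Defs "Jordan_Normal_Form.Schur_Decomposition"
begin


definition srg_mat :: "nat \<Rightarrow> (nat \<Rightarrow> nat \<Rightarrow> real) \<Rightarrow> real \<Rightarrow> real \<Rightarrow> real \<Rightarrow> bool" where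
 "srg_mat N a k l m \<longleftrightarrow> (\<forall>i<N. \<forall>j<N. a i j = a j i) \<and> (\<forall>i<N. a i i = 0) \<and>
   (\<forall>i<N. (\<Sum>j<N. a i j) = k) \<and>
   (\<forall>i<N. \<forall>t<N. (\<Sum>j<N. a i j * a j t) = (if i = t then k - m else 0) + (l - m) * a i t + m)"

definition amat :: "nat \<Rightarrow> (nat \<Rightarrow> nat \<Rightarrow> real) \<Rightarrow> complex mat" where
  "amat N a = mat N N (\<lambda>(i,j). complex_of_real (a i j))"

definition mtr :: "'a::comm_ring_1 mat \<Rightarrow> 'a" where "mtr X = (\<Sum>i<dim_row X. X $$ (i,i))"

lemma mtr_comm:
  assumes "X \<in> carrier_mat n m" "Y \<in> carrier_mat m n"
  shows "mtr (X*Y) = mtr (Y*X)"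
proof -
  have "mtr (X*Y) = (\<Sum>i<n. \<Sum>j<m. X $$ (i,j) * Y $$ (j,i))"
    using assms by (simp add: mtr_def scalar_prod_def atLeast0LessThan)
  also have "\<dots> = (\<Sum>j<m. \<Sum>i<n. Y $$ (j,i) * X $$ (i,j))"
    by (subst sum.swap) (simp add: mult.commute)
  also have "\<dots> = mtr (Y*X)"
    using assms by (simp add: mtr_def scalar_prod_def atLeast0LessThan)
  finally show ?thesis .
qed

lemma mtr_sim:
  assumes "similar_mat_wit A B P Q" "A \<in> carrier_mat n n"
  shows "mtr A = mtr B"
proof -
  from similar_mat_witD2[OF assms(2) assms(1)]
  have B: "B \<in> carrier_mat n n" and P: "P \<in> carrier_mat n n" and Q: "Q \<in> carrier_mat n n"
    and QP: "Q * P = 1\<^sub>m n" and AB: "A = P * B * Q" by auto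
  have "mtr A = mtr ((P * B) * Q)" using AB by simp
  also have "\<dots> = mtr (Q * (P * B))" using P B Q by (intro mtr_comm[of _ n n]) auto
  also have "Q * (P * B) = (Q * P) * B" using P B Q by (simp add: assoc_mult_mat[of _ n n _ n _ n])
  also have "\<dots> = B" using QP B by simp
  finally show ?thesis .
qed

lemma ut_sq_diag:
  assumes "B \<in> carrier_mat n n" "upper_triangular B" "i < n"
  shows "(B * B) $$ (i,i) = B $$ (i,i) * B $$ (i,i)"
proof -
  have "(B * B) $$ (i,i) = (\<Sum>j\<in>{0..<n}. B $$ (i,j) * B $$ (j,i))"
    using assms by (simp add: scalar_prod_def)
  also have "\<dots> = (\<Sum>j\<in>{0..<n}. if j = i then B $$ (i,i) * B $$ (i,i) else 0)"
  proof (rule sum.cong[OF refl])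
    fix j assume "j \<in> {0..<n}"
    then show "B $$ (i,j) * B $$ (j,i) = (if j = i then B $$ (i,i) * B $$ (i,i) else 0)" using assms
      by (cases "j < i") (auto simp: upper_triangular_def)
  qed
  also have "\<dots> = B $$ (i,i) * B $$ (i,i)" using assms by simp
  finally show ?thesis .
qed

lemma srg_eig:
  assumes srg: "srg_mat N a k l m" and ev: "eigenvalue (amat N a) x"
  shows "x = of_real k \<or> x * x - of_real (l - m) * x - of_real (k - m) = 0"
proof -
  let ?c = "\<lambda>i j. complex_of_real (a i j)"
  from ev obtain v where "eigenvector (amat N a) v x" unfolding eigenvalue_def by auto
  then have v: "v \<in> carrier_vec N" and v0: "v \<noteq> 0\<^sub>v N" and Av: "amat N a *\<^sub>v v = x \<cdot>\<^sub>v v"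
    unfolding eigenvector_def amat_def by auto
  have evi: "(\<Sum>j<N. ?c i j * v $ j) = x * v $ i" if "i < N" for i
  proof -
    have "(amat N a *\<^sub>v v) $ i = (x \<cdot>\<^sub>v v) $ i" using Av by simp
    then show ?thesis using that v by (simp add: amat_def scalar_prod_def atLeast0LessThan)
  qed
  have sym: "a i j = a j i" if "i < N" "j < N" for i j using srg that unfolding srg_mat_def by auto
  have rows: "(\<Sum>j<N. a i j) = k" if "i < N" for i using srg that unfolding srg_mat_def by auto
  have sq: "(\<Sum>j<N. ?c i j * ?c j t) = (if i = t then of_real (k - m) else 0) + of_real (l - m) * ?c i t + of_real m"
    if "i < N" "t < N" for i t
  proof -
    have "(\<Sum>j<N. ?c i j * ?c j t) = of_real (\<Sum>j<N. a i j * a j t)" by (simp only: of_real_sum of_real_mult)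
    also have e: "(\<Sum>j<N. a i j * a j t) = ((if i = t then k - m else 0) + (l - m) * a i t + m)"
      using srg that unfolding srg_mat_def by blast
    also have "complex_of_real \<dots> = (if i = t then of_real (k - m) else 0) + of_real (l - m) * ?c i t + of_real m"
      by simp
    finally show ?thesis .
  qed
  define S where "S = (\<Sum>j<N. v $ j)"
  have xS: "x * S = of_real k * S"
  proof -
    have "x * S = (\<Sum>i<N. x * v $ i)" by (simp add: S_def sum_distrib_left)
    also have "\<dots> = (\<Sum>i<N. \<Sum>j<N. ?c i j * v $ j)" using evi by simp
    also have "\<dots> = (\<Sum>j<N. \<Sum>i<N. ?c i j * v $ j)" by (rule sum.swap)
    also have "\<dots> = (\<Sum>j<N. of_real (\<Sum>i<N. a j i) * v $ j)"
      by (intro sum.cong refl) (simp add: sum_distrib_right sym)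
    also have "\<dots> = (\<Sum>j<N. of_real k * v $ j)" using rows by simp
    also have "\<dots> = of_real k * S" by (simp add: S_def sum_distrib_left)
    finally show ?thesis .
  qed
  have sqi: "x * x * v $ i = of_real (k - m) * v $ i + of_real (l - m) * (x * v $ i) + of_real m * S"
    if i: "i < N" for i
  proof -
    have "x * x * v $ i = x * (\<Sum>j<N. ?c i j * v $ j)" using evi[OF i] by simp
    also have "\<dots> = (\<Sum>j<N. ?c i j * (x * v $ j))" by (simp add: sum_distrib_left algebra_simps)
    also have "\<dots> = (\<Sum>j<N. ?c i j * (\<Sum>t<N. ?c j t * v $ t))" using evi by simp
    also have "\<dots> = (\<Sum>j<N. \<Sum>t<N. ?c i j * ?c j t * v $ t)"
      by (simp add: sum_distrib_left algebra_simps)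
    also have "\<dots> = (\<Sum>t<N. \<Sum>j<N. ?c i j * ?c j t * v $ t)" by (rule sum.swap)
    also have "\<dots> = (\<Sum>t<N. (\<Sum>j<N. ?c i j * ?c j t) * v $ t)"
      by (simp add: sum_distrib_right)
    also have "\<dots> = (\<Sum>t<N. ((if i = t then of_real (k - m) else 0) + of_real (l - m) * ?c i t + of_real m) * v $ t)"
      using sq i by simp
    also have "\<dots> = (\<Sum>t<N. (if i = t then of_real (k - m) * v $ t else 0) + of_real (l - m) * (?c i t * v $ t) + of_real m * v $ t)"
      by (intro sum.cong refl) (auto simp: algebra_simps)
    also have "\<dots> = (\<Sum>t<N. (if i = t then of_real (k - m) * v $ t else 0)) + of_real (l - m) * (\<Sum>t<N. ?c i t * v $ t) + of_real m * S"
      by (simp only: sum.distrib sum_distrib_left S_def)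
    also have "(\<Sum>t<N. (if i = t then of_real (k - m) * v $ t else 0)) = of_real (k - m) * v $ i"
      using i by (simp add: sum.delta)
    finally show ?thesis using evi[OF i] by simp
  qed
  show ?thesis
  proof (cases "x = of_real k")
    case False
    with xS have S0: "S = 0" by simp
    from v0 v obtain i where i: "i < N" and vi: "v $ i \<noteq> 0" by (auto simp: vec_eq_iff)
    have "(x * x - of_real (l - m) * x - of_real (k - m)) * v $ i = 0"
      using sqi[OF i] S0 by (simp add: algebra_simps)
    with vi show ?thesis by simp
  qed simp
qed

lemma srg_rel:
  assumes srg: "srg_mat N a k l m" and N0: "0 < N"
  shows "k * k = (k - m) + (l - m) * k + m * N"
proof -
  have sym: "a i j = a j i" if "i < N" "j < N" for i j using srg that unfolding srg_mat_def by auto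
  have rows: "(\<Sum>j<N. a i j) = k" if "i < N" for i using srg that unfolding srg_mat_def by auto
  have sq: "(\<Sum>j<N. a i j * a j t) = (if i = t then k - m else 0) + (l - m) * a i t + m"
    if "i < N" "t < N" for i t using srg that unfolding srg_mat_def by blast
  have "(\<Sum>t<N. \<Sum>j<N. a 0 j * a j t) = (\<Sum>j<N. a 0 j * (\<Sum>t<N. a j t))"
    by (subst sum.swap) (simp add: sum_distrib_left)
  also have "\<dots> = (\<Sum>j<N. a 0 j * k)" using rows by simp
  also have "\<dots> = (\<Sum>j<N. a 0 j) * k" by (rule sum_distrib_right[symmetric])
  also have "\<dots> = k * k" using rows[OF N0] by simp
  finally have 1: "(\<Sum>t<N. \<Sum>j<N. a 0 j * a j t) = k * k" .
  have "(\<Sum>t<N. \<Sum>j<N. a 0 j * a j t) = (\<Sum>t<N. (if 0 = t then k - m else 0) + (l - m) * a 0 t + m)"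
    using sq N0 by simp
  also have "\<dots> = (\<Sum>t<N. (if 0 = t then k - m else 0)) + (l - m) * (\<Sum>t<N. a 0 t) + m * N"
    by (simp add: sum.distrib sum_distrib_left)
  also have "\<dots> = (k - m) + (l - m) * k + m * N" using N0 rows[OF N0] by simp
  finally show ?thesis using 1 by simp
qed

lemma proots_lin: "proots (\<Prod>x\<leftarrow>as. [:- x, 1:]) = mset (as :: complex list)"
proof (induction as)
  case (Cons x as)
  have "(\<Prod>y\<leftarrow>x # as. [:- y, 1:]) = [:- x, 1:] * (\<Prod>y\<leftarrow>as. [:- y, 1:])"
    by (simp only: list.map prod_list.Cons)
  also have "proots \<dots> = proots [:- x, 1:] + proots (\<Prod>y\<leftarrow>as. [:- y, 1:])"
    by (rule proots_mult) (auto simp: prod_list_zero_iff)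
  also have "proots [:- x, 1:] = {#x#}" using proots_linear_factor[of "-x"] by simp
  finally show ?case using Cons by simp
qed simp

lemma mset_three:
  assumes "set_mset M \<subseteq> {x, y, z}" "x \<noteq> y" "x \<noteq> z" "y \<noteq> z"
  shows "M = replicate_mset (count M x) x + replicate_mset (count M y) y + replicate_mset (count M z) z"
proof (rule multiset_eqI)
  fix w
  show "count M w = count (replicate_mset (count M x) x + replicate_mset (count M y) y + replicate_mset (count M z) z) w"
  proof (cases "w \<in> {x,y,z}")
    case True then show ?thesis using assms by auto
  next
    case False
    then have "w \<notin># M" using assms by auto
    then show ?thesis using False by (auto simp: count_eq_zero_iff)
  qed
qed

lemma srg_spec:
  assumes srg: "srg_mat N a k l m" and m0: "0 < m" and mk: "m < k" and N0: "0 < N"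
  defines "D \<equiv> (l - m)^2 + 4 * (k - m)"
  defines "r \<equiv> ((l - m) + sqrt D) / 2" and "s \<equiv> ((l - m) - sqrt D) / 2"
  shows "\<exists>cR cS. proots (char_poly (amat N a)) =
      {#complex_of_real k#} + replicate_mset cR (complex_of_real r) + replicate_mset cS (complex_of_real s)
    \<and> real cR + real cS = real N - 1 \<and> real cR * r + real cS * s = - k
    \<and> k^2 + real cR * r^2 + real cS * s^2 = real N * k"
proof -
  define A where "A = amat N a"
  have A: "A \<in> carrier_mat N N" by (simp add: A_def amat_def)
  from char_poly_factorized[OF A] obtain as where cp: "char_poly A = (\<Prod>x\<leftarrow>as. [:- x, 1:])"
    and len: "length as = N" by blast
  obtain B P Q where sch: "schur_decomposition A as = (B,P,Q)" by (cases "schur_decomposition A as") auto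
  from schur_decomposition[OF A cp sch] have sim: "similar_mat_wit A B P Q"
    and ut: "upper_triangular B" and dg: "diag_mat B = as" by auto
  from similar_mat_witD2[OF A sim] have B: "B \<in> carrier_mat N N" by auto
  define M where "M = mset as"
  have pr: "proots (char_poly A) = M" unfolding cp M_def by (rule proots_lin)
  have sumM: "(\<Sum>x\<in>#M. f x) = (\<Sum>i<N. f (B $$ (i,i)))" for f :: "complex \<Rightarrow> complex"
  proof -
    have "M = image_mset (\<lambda>i. B $$ (i,i)) (mset_set {0..<N})"
      unfolding M_def dg[symmetric] diag_mat_def using B by simp
    then show ?thesis by (simp add: sum_unfold_sum_mset atLeast0LessThan image_mset.compositionality o_def)
  qed
  have sizeM: "size M = N" using len by (simp add: M_def)
  have tr1: "(\<Sum>x\<in>#M. x) = 0"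
  proof -
    have "(\<Sum>x\<in>#M. x) = mtr B" using sumM[of "\<lambda>x. x"] B by (simp add: mtr_def)
    also have "\<dots> = mtr A" using mtr_sim[OF sim A] by simp
    also have "\<dots> = 0" using srg unfolding mtr_def A_def amat_def srg_mat_def by simp
    finally show ?thesis .
  qed
  have tr2: "(\<Sum>x\<in>#M. x * x) = of_real (real N * k)"
  proof -
    have "(\<Sum>x\<in>#M. x * x) = (\<Sum>i<N. B $$ (i,i) * B $$ (i,i))" using sumM by simp
    also have "\<dots> = (\<Sum>i<N. (B * B) $$ (i,i))"
      by (rule sum.cong[OF refl], rule ut_sq_diag[symmetric]) (use B ut in auto)
    also have "\<dots> = mtr (B * B)" unfolding mtr_def using B by simp
    also have "\<dots> = mtr (A * A)"
    proof -
      have "similar_mat_wit (A ^\<^sub>m 2) (B ^\<^sub>m 2) P Q" by (rule similar_mat_wit_pow[OF sim])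
      moreover have "A ^\<^sub>m 2 = A * A" using A by (simp add: numeral_2_eq_2)
      moreover have "B ^\<^sub>m 2 = B * B" using B by (simp add: numeral_2_eq_2)
      ultimately have "similar_mat_wit (A * A) (B * B) P Q" by simp
      from mtr_sim[OF this] A show ?thesis by (metis mult_carrier_mat)
    qed
    also have "\<dots> = (\<Sum>i<N. complex_of_real (\<Sum>j<N. a i j * a j i))"
      using A by (simp add: mtr_def A_def amat_def scalar_prod_def atLeast0LessThan)
    also have "\<dots> = (\<Sum>i<N. complex_of_real k)"
    proof (intro sum.cong refl)
      fix i assume i: "i \<in> {..<N}"
      have "(\<Sum>j<N. a i j * a j i) = (if i = i then k - m else 0) + (l - m) * a i i + m"
        using srg i unfolding srg_mat_def by blast
      also have "\<dots> = k" using srg i unfolding srg_mat_def by simp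
      finally show "complex_of_real (\<Sum>j<N. a i j * a j i) = complex_of_real k" by simp
    qed
    also have "\<dots> = of_real (real N * k)" by simp
    finally show ?thesis .
  qed
  have D0: "D > 0" unfolding D_def using mk by (smt (verit) zero_le_power2)
  have sD: "sqrt D * sqrt D = D" using D0 by simp
  have rs_sum: "r + s = l - m" unfolding r_def s_def by (simp add: field_simps)
  have rs_prod: "r * s = - (k - m)"
  proof -
    have "r * s = ((l - m)^2 - sqrt D * sqrt D) / 4" unfolding r_def s_def
      by (simp add: field_simps power2_eq_square)
    also have "\<dots> = ((l - m)^2 - D) / 4" by (simp only: sD)
    also have "\<dots> = - (k - m)" unfolding D_def by simp
    finally show ?thesis .
  qed
  have rel: "k * k = (k - m) + (l - m) * k + m * N" by (rule srg_rel[OF srg N0])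
  have kr: "(k - r) * (k - s) = m * N"
  proof -
    have "(k - r) * (k - s) = k * k - (r + s) * k + r * s" by (simp add: algebra_simps)
    also have "\<dots> = m * N" using rel rs_sum rs_prod by simp
    finally show ?thesis .
  qed
  have mN: "m * N > 0" using m0 N0 by simp
  have kr1: "k \<noteq> r" and ks1: "k \<noteq> s" using kr mN by auto
  have rs1: "r \<noteq> s" unfolding r_def s_def using D0 by simp
  have setM: "set_mset M \<subseteq> {complex_of_real k, complex_of_real r, complex_of_real s}"
  proof
    fix x assume "x \<in># M"
    then have "x \<in> set as" by (simp add: M_def)
    then have "poly (char_poly A) x = 0" unfolding cp poly_prod_list prod_list_zero_iff by force
    then have "eigenvalue A x" using eigenvalue_root_char_poly[OF A] by simp
    then have "x = of_real k \<or> x * x - of_real (l - m) * x - of_real (k - m) = 0"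
      using srg_eig[OF srg] A_def by simp
    moreover have "x * x - of_real (l - m) * x - of_real (k - m) = (x - of_real r) * (x - of_real s)"
    proof -
      have "(x - of_real r) * (x - of_real s) = x * x - of_real (r + s) * x + of_real (r * s)"
        by (simp add: algebra_simps)
      then show ?thesis using rs_sum rs_prod by simp
    qed
    ultimately show "x \<in> {complex_of_real k, complex_of_real r, complex_of_real s}" by auto
  qed
  define cK where "cK = count M (of_real k)"
  define cR where "cR = count M (of_real r)"
  define cS where "cS = count M (of_real s)"
  have Meq: "M = replicate_mset cK (of_real k) + replicate_mset cR (of_real r) + replicate_mset cS (of_real s)"
    unfolding cK_def cR_def cS_def by (rule mset_three[OF setM]) (use kr1 ks1 rs1 in auto)
  have sumf: "(\<Sum>x\<in>#M. f x) = of_nat cK * f (of_real k) + of_nat cR * f (of_real r) + of_nat cS * f (of_real s)"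
    for f :: "complex \<Rightarrow> complex"
    by (subst Meq) simp
  have e0: "real cK + real cR + real cS = real N" using sizeM Meq by (metis of_nat_add size_replicate_mset size_union)
  have "complex_of_real (real cK * k + real cR * r + real cS * s) = 0"
    using tr1 sumf[of "\<lambda>x. x"] by simp
  then have e1: "real cK * k + real cR * r + real cS * s = 0" by (simp only: of_real_eq_0_iff)
  have "complex_of_real (real cK * (k * k) + real cR * (r * r) + real cS * (s * s)) = of_real (real N * k)"
    using tr2 sumf[of "\<lambda>x. x * x"] by simp
  then have e2: "real cK * (k * k) + real cR * (r * r) + real cS * (s * s) = real N * k" by (simp only: of_real_eq_iff)
  have "real cK * ((k - r) * (k - s)) = real cK * (k * k) + real cR * (r * r) + real cS * (s * s)
      - (r + s) * (real cK * k + real cR * r + real cS * s) + r * s * (real cK + real cR + real cS)"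
    by (simp add: algebra_simps)
  also have "\<dots> = real N * k - (r + s) * 0 + r * s * real N" using e0 e1 e2 by simp
  also have "\<dots> = m * N" unfolding rs_prod by (simp add: algebra_simps)
  finally have "real cK * (m * N) = 1 * (m * N)" using kr by simp
  then have cK1: "cK = 1" using mN m0 N0 by auto
  show ?thesis
  proof (intro exI conjI)
    show "proots (char_poly (amat N a)) = {#complex_of_real k#} + replicate_mset cR (complex_of_real r) + replicate_mset cS (complex_of_real s)"
      using pr Meq cK1 A_def by simp
    show "real cR + real cS = real N - 1" using e0 cK1 by simp
    show "real cR * r + real cS * s = - k" using e1 cK1 by simp
    show "k^2 + real cR * r^2 + real cS * s^2 = real N * k" using e2 cK1 by (simp add: power2_eq_square)
  qed
qed



lemma sum_ind: "finite A \<Longrightarrow> (\<Sum>j\<in>A. if P j then (1::real) else 0) = real (card (A \<inter> {j. P j}))"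
  by (simp add: sum.If_cases)

lemma graph_srg_mat:
  assumes srg: "strongly_regular N E N k e d"
  shows "srg_mat N (\<lambda>i j. if E i j then 1 else 0) k e d"
proof -
  have simple: "simple_graph N E" and deg: "\<forall>i<N. card (neighbours N E i) = k"
    and ee: "\<forall>i<N. \<forall>j<N. E i j \<longrightarrow> card (neighbours N E i \<inter> neighbours N E j) = e"
    and dd: "\<forall>i<N. \<forall>j<N. i \<noteq> j \<and> \<not> E i j \<longrightarrow> card (neighbours N E i \<inter> neighbours N E j) = d"
    using srg unfolding strongly_regular_def by auto
  have sym: "E i j = E j i" if "i < N" "j < N" for i j using simple that unfolding simple_graph_def by auto
  have irr: "\<not> E i i" if "i < N" for i using simple that unfolding simple_graph_def by auto
  have rows: "(\<Sum>j<N. if E i j then (1::real) else 0) = real k" if "i < N" for i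
  proof -
    have "(\<Sum>j<N. if E i j then (1::real) else 0) = real (card ({..<N} \<inter> {j. E i j}))" by (rule sum_ind) simp
    also have "{..<N} \<inter> {j. E i j} = neighbours N E i" by (auto simp: neighbours_def)
    finally show ?thesis using deg that by simp
  qed
  have prods: "(\<Sum>j<N. (if E i j then (1::real) else 0) * (if E j t then 1 else 0)) =
     (if i = t then real k - real d else 0) + (real e - real d) * (if E i t then 1 else 0) + real d"
    if i: "i < N" and t: "t < N" for i t
  proof -
    have "(\<Sum>j<N. (if E i j then (1::real) else 0) * (if E j t then 1 else 0)) =
        (\<Sum>j<N. if E i j \<and> E j t then (1::real) else 0)" by (intro sum.cong refl) auto
    also have "\<dots> = real (card ({..<N} \<inter> {j. E i j \<and> E j t}))" by (rule sum_ind) simp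
    also have "{..<N} \<inter> {j. E i j \<and> E j t} = neighbours N E i \<inter> neighbours N E t"
      using sym t by (auto simp: neighbours_def)
    finally have c: "(\<Sum>j<N. (if E i j then (1::real) else 0) * (if E j t then 1 else 0)) =
        real (card (neighbours N E i \<inter> neighbours N E t))" .
    show ?thesis
    proof (cases "i = t")
      case True then show ?thesis using c deg i irr by simp
    next
      case False
      show ?thesis
      proof (cases "E i t")
        case True then show ?thesis using c ee i t False by simp
      next
        case nE: False then show ?thesis using c dd i t False by simp
      qed
    qed
  qed
  show ?thesis unfolding srg_mat_def using sym irr rows prods by auto
qed

definition cmat :: "(nat \<Rightarrow> nat \<Rightarrow> real) \<Rightarrow> nat \<Rightarrow> nat \<Rightarrow> real" where
  "cmat a i j = 1 - a i j - (if i = j then 1 else 0)"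

lemma compl_srg_mat:
  assumes srg: "srg_mat N a k l m"
  shows "srg_mat N (cmat a) (N - k - 1) (N - 2*k + m - 2) (N - 2*k + l)"
proof -
  have sym: "a i j = a j i" if "i < N" "j < N" for i j using srg that unfolding srg_mat_def by auto
  have dg: "a i i = 0" if "i < N" for i using srg that unfolding srg_mat_def by auto
  have rows: "(\<Sum>j<N. a i j) = k" if "i < N" for i using srg that unfolding srg_mat_def by auto
  have cols: "(\<Sum>j<N. a j i) = k" if "i < N" for i using rows[OF that] sym that by (metis (no_types, lifting) lessThan_iff sum.cong)
  have sq: "(\<Sum>j<N. a i j * a j t) = (if i = t then k - m else 0) + (l - m) * a i t + m"
    if "i < N" "t < N" for i t using srg that unfolding srg_mat_def by blast
  have crows: "(\<Sum>j<N. cmat a i j) = N - k - 1" if i: "i < N" for i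
    using i rows[OF i] by (simp add: cmat_def sum_subtractf)
  have csq: "(\<Sum>j<N. cmat a i j * cmat a j t) = (if i = t then (N - k - 1) - (N - 2*k + l) else 0)
      + ((N - 2*k + m - 2) - (N - 2*k + l)) * cmat a i t + (N - 2*k + l)"
    if i: "i < N" and t: "t < N" for i t
  proof -
    have "(\<Sum>j<N. cmat a i j * cmat a j t) = (\<Sum>j<N. 1 - a j t - (if j = t then 1 else 0) - a i j
        + a i j * a j t + (if j = t then a i j else 0) - (if i = j then 1 else 0) + (if i = j then a j t else 0)
        + (if j = t then (if i = t then 1 else 0) else 0))"
      by (intro sum.cong refl) (auto simp: cmat_def algebra_simps)
    also have "\<dots> = N - k - 1 - k + (\<Sum>j<N. a i j * a j t) + a i t - 1 + a i t + (if i = t then 1 else 0)"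
      using i t rows cols by (simp add: sum.distrib sum_subtractf)
    finally have X: "(\<Sum>j<N. cmat a i j * cmat a j t) = N - k - 1 - k + (\<Sum>j<N. a i j * a j t) + a i t - 1 + a i t + (if i = t then 1 else 0)" .
    have cit: "cmat a i t = 1 - a i t - (if i = t then 1 else 0)" by (simp add: cmat_def)
    show ?thesis unfolding X sq[OF i t] cit using dg i by (cases "i = t") (auto simp: algebra_simps)
  qed
  show ?thesis unfolding srg_mat_def using crows csq sym dg by (auto simp: cmat_def)
qed



lemma conn_witness:
  assumes irr: "\<forall>i<N. \<not> F i i"
    and conn: "graph_connected N F" and nc: "\<not> (\<forall>i<N. \<forall>j<N. i \<noteq> j \<longrightarrow> F i j)"
  shows "\<exists>i j t. i < N \<and> j < N \<and> t < N \<and> i \<noteq> j \<and> \<not> F i j \<and> F i t \<and> F t j"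
proof (rule ccontr)
  assume H: "\<not> ?thesis"
  let ?R = "\<lambda>x y. x < N \<and> y < N \<and> F x y"
  have reach: "i = j \<or> F i j" if "?R\<^sup>*\<^sup>* i j" "i < N" for i j
    using that(1)
  proof (induction rule: rtranclp_induct)
    case base then show ?case by simp
  next
    case (step y z)
    then have y: "y < N" and z: "z < N" and yz: "F y z" by auto
    show ?case
    proof (cases "i = y")
      case True then show ?thesis using yz by simp
    next
      case False
      then have iy: "F i y" using step by simp
      show ?thesis using H iy yz y z \<open>i < N\<close> by blast
    qed
  qed
  from nc obtain i j where ij: "i < N" "j < N" "i \<noteq> j" "\<not> F i j" by blast
  then have "?R\<^sup>*\<^sup>* i j" using conn unfolding graph_connected_def by blast
  from reach[OF this] ij show False by simp
qed

lemma witness_m: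
  assumes srg: "srg_mat N a k l m" and zo: "\<forall>i<N. \<forall>j<N. a i j = 0 \<or> a i j = 1"
    and i: "i < N" and j: "j < N" and t: "t < N" and ij: "i \<noteq> j" and aij: "a i j = 0"
    and ait: "a i t = 1" and atj: "a t j = 1"
  shows "m \<ge> 1 \<and> k \<ge> 1"
proof -
  have nn: "a x y \<ge> 0" if "x < N" "y < N" for x y using zo that by (metis order.refl zero_le_one)
  have "(\<Sum>u<N. a i u * a u j) = (if i = j then k - m else 0) + (l - m) * a i j + m"
    using srg i j unfolding srg_mat_def by blast
  then have s1: "(\<Sum>u<N. a i u * a u j) = m" using ij aij by simp
  have "a i t * a t j \<le> (\<Sum>u<N. a i u * a u j)"
    by (rule member_le_sum) (use t nn i j in auto)
  then have m1: "m \<ge> 1" using s1 ait atj by simp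
  have "(\<Sum>u<N. a i u) = k" using srg i unfolding srg_mat_def by auto
  moreover have "a i t \<le> (\<Sum>u<N. a i u)"
    by (rule member_le_sum) (use t nn i in auto)
  ultimately show ?thesis using m1 ait by simp
qed

lemma srg_unique:
  assumes "strongly_regular N E n k e d" "strongly_regular N E n' k' e' d'"
  shows "n = n' \<and> k = k' \<and> e = e' \<and> d = d'"
proof -
  from assms(1) obtain i j where ij: "i < N" "j < N" "E i j" unfolding strongly_regular_def by blast
  from assms(1) obtain i2 j2 where ij2: "i2 < N" "j2 < N" "i2 \<noteq> j2" "\<not> E i2 j2" unfolding strongly_regular_def by blast
  show ?thesis using assms ij ij2 unfolding strongly_regular_def by metis
qed

lemma rat_root_int:
  fixes x :: real and b c :: int
  assumes "x \<in> \<rat>" "x * x = of_int b * x + of_int c"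
  shows "x \<in> \<int>"
proof -
  from Rats_cases'[OF assms(1)] obtain p q :: int where q: "q > 0" and cop: "coprime p q"
    and x: "x = of_int p / of_int q" by blast
  have "real_of_int p * of_int p = of_int b * of_int p * of_int q + of_int c * (of_int q * of_int q)"
    using assms(2) q unfolding x by (simp add: field_simps)
  then have "p * p = b * p * q + c * (q * q)" by (metis of_int_eq_iff of_int_add of_int_mult)
  then have "q dvd p * p" by (metis dvd_add dvd_mult dvd_mult2 dvd_refl mult.commute)
  moreover have "coprime q (p * p)" using cop by (simp add: coprime_commute)
  ultimately have "is_unit q" by (metis coprime_common_divisor dvd_refl)
  then have "q = 1" using q by auto
  then show ?thesis using x by simp
qed



lemma energy_eq:
  assumes "proots (char_poly (adj_matrix N E)) = {#complex_of_real K#} + replicate_mset cR (complex_of_real r) + replicate_mset cS (complex_of_real s)"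
  shows "energy N E = \<bar>K\<bar> + real cR * \<bar>r\<bar> + real cS * \<bar>s\<bar>"
  using assms unfolding energy_def adj_spectrum_def by simp

lemma sumsq_eq:
  assumes "proots (char_poly (adj_matrix N E)) = {#complex_of_real K#} + replicate_mset cR (complex_of_real r) + replicate_mset cS (complex_of_real s)"
  shows "(\<Sum>x\<in>#adj_spectrum N E. x * x) = complex_of_real (K^2 + real cR * r^2 + real cS * s^2)"
  using assms unfolding adj_spectrum_def by (simp add: power2_eq_square)

theorem mainTheorem13:
  fixes N :: nat and E :: "nat \<Rightarrow> nat \<Rightarrow> bool"
  assumes "primitive_srg N E"
  shows "(energy N E = energy N (compl_graph E) \<longleftrightarrow>
            conference_graph N E \<or>
            (\<exists>n m. n > 0 \<and> m > 0 \<and> m \<notin> {n, n+1} \<and> has_OA_params N E n m))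
       \<and> (energy N E = energy N (compl_graph E) \<and> \<not> conference_graph N E
            \<longrightarrow> \<not> isospectral N E (compl_graph E))"
proof -
  from assms obtain k e d where srg: "strongly_regular N E N k e d"
    and conn1: "graph_connected N E" and conn2: "graph_connected N (compl_graph E)"
    unfolding primitive_srg_def is_srg_def by blast
  have simple: "simple_graph N E" using srg unfolding strongly_regular_def by auto
  have sym: "E i j = E j i" if "i < N" "j < N" for i j using simple that unfolding simple_graph_def by auto
  have irr: "\<not> E i i" if "i < N" for i using simple that unfolding simple_graph_def by auto
  from srg obtain i0 j0 where ij0: "i0 < N" "j0 < N" "E i0 j0" unfolding strongly_regular_def by blast
  have N0: "0 < N" using ij0 by simp
  define a where "a = (\<lambda>i j. if E i j then 1 else (0::real))"
  define K where "K = real k"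
  define L where "L = real e"
  define Mu where "Mu = real d"
  define Nr where "Nr = real N"
  have srgA: "srg_mat N a K L Mu" unfolding a_def K_def L_def Mu_def by (rule graph_srg_mat[OF srg])
  have srgB: "srg_mat N (cmat a) (Nr - K - 1) (Nr - 2*K + Mu - 2) (Nr - 2*K + L)"
    unfolding Nr_def by (rule compl_srg_mat[OF srgA])
  have ca: "cmat a i j = (if compl_graph E i j then 1 else 0)" if "i < N" "j < N" for i j
    using irr that by (auto simp: cmat_def a_def compl_graph_def)
  have matA: "amat N a = adj_matrix N E" unfolding amat_def adj_matrix_def a_def
    by (rule eq_matI) auto
  have matB: "amat N (cmat a) = adj_matrix N (compl_graph E)" unfolding amat_def adj_matrix_def
    by (rule eq_matI) (auto simp: ca)
  have zoA: "\<forall>i<N. \<forall>j<N. a i j = 0 \<or> a i j = 1" by (auto simp: a_def)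
  have zoB: "\<forall>i<N. \<forall>j<N. cmat a i j = 0 \<or> cmat a i j = 1" by (auto simp: ca)
  have ncA: "\<not> (\<forall>i<N. \<forall>j<N. i \<noteq> j \<longrightarrow> E i j)" using srg unfolding strongly_regular_def by blast
  obtain i j t where w1: "i < N" "j < N" "t < N" "i \<noteq> j" "\<not> E i j" "E i t" "E t j"
    using conn_witness[OF _ conn1 ncA] irr by blast
  have W1: "Mu \<ge> 1 \<and> K \<ge> 1"
    by (rule witness_m[OF srgA zoA w1(1,2,3,4)]) (use w1 in \<open>auto simp: a_def\<close>)
  have ncB: "\<not> (\<forall>i<N. \<forall>j<N. i \<noteq> j \<longrightarrow> compl_graph E i j)" using ij0 irr[OF ij0(1)] by (auto simp: compl_graph_def)
  obtain i' j' t' where w2: "i' < N" "j' < N" "t' < N" "i' \<noteq> j'" "\<not> compl_graph E i' j'"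
    "compl_graph E i' t'" "compl_graph E t' j'"
    using conn_witness[OF _ conn2 ncB] by (auto simp: compl_graph_def)
  have W2: "Nr - 2*K + L \<ge> 1 \<and> Nr - K - 1 \<ge> 1"
    by (rule witness_m[OF srgB zoB w2(1,2,3,4)]) (use w2 in \<open>auto simp: ca\<close>)
  have rel1: "K * K = (K - Mu) + (L - Mu) * K + Mu * Nr"
    using srg_rel[OF srgA N0] Nr_def by simp
  have E1: "K * ((Nr - K - 1) - (Nr - 2*K + L)) = Mu * (Nr - K - 1)" using rel1 by (simp add: algebra_simps)
  have rel2: "(Nr - K - 1) * (Nr - K - 1) = ((Nr - K - 1) - (Nr - 2*K + L)) + ((Nr - 2*K + Mu - 2) - (Nr - 2*K + L)) * (Nr - K - 1) + (Nr - 2*K + L) * Nr"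
    using srg_rel[OF srgB N0] Nr_def by simp
  have E2: "(Nr - K - 1) * (K - Mu) = (Nr - 2*K + L) * K" using rel2 by (simp add: algebra_simps)
  define K' where "K' = Nr - K - 1"
  define Mu' where "Mu' = Nr - 2*K + L"
  have K1: "K \<ge> 1" and Mu1: "Mu \<ge> 1" using W1 by auto
  have K'1: "K' \<ge> 1" and Mu'1: "Mu' \<ge> 1" using W2 by (auto simp: K'_def Mu'_def)
  have E1': "K * (K' - Mu') = Mu * K'" using E1 by (simp add: K'_def Mu'_def)
  have E2': "K' * (K - Mu) = Mu' * K" using E2 by (simp add: K'_def Mu'_def)
  have muk: "Mu < K"
  proof -
    have "Mu' * K > 0" using K1 Mu'1 by simp
    then have "K' * (K - Mu) > 0" using E2' by simp
    then show ?thesis using K'1 by (simp add: zero_less_mult_iff)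
  qed
  have muk2: "Mu' < K'"
  proof -
    have "Mu * K' > 0" using K'1 Mu1 by simp
    then have "K * (K' - Mu') > 0" using E1' by simp
    then show ?thesis using K1 by (simp add: zero_less_mult_iff)
  qed
  define D where "D = (L - Mu)^2 + 4 * (K - Mu)"
  define r where "r = ((L - Mu) + sqrt D) / 2"
  define s where "s = ((L - Mu) - sqrt D) / 2"
  obtain cR cS where sp1: "proots (char_poly (adj_matrix N E)) =
      {#complex_of_real K#} + replicate_mset cR (complex_of_real r) + replicate_mset cS (complex_of_real s)"
    and c1: "real cR + real cS = Nr - 1" and c2: "real cR * r + real cS * s = - K"
    and c3: "K^2 + real cR * r^2 + real cS * s^2 = Nr * K"
    using srg_spec[OF srgA _ muk N0] Mu1 unfolding matA r_def s_def D_def Nr_def by auto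
  define D2 where "D2 = ((Nr - 2*K + Mu - 2) - (Nr - 2*K + L))^2 + 4 * ((Nr - K - 1) - (Nr - 2*K + L))"
  define r2 where "r2 = (((Nr - 2*K + Mu - 2) - (Nr - 2*K + L)) + sqrt D2) / 2"
  define s2 where "s2 = (((Nr - 2*K + Mu - 2) - (Nr - 2*K + L)) - sqrt D2) / 2"
  obtain cR2 cS2 where sp2: "proots (char_poly (adj_matrix N (compl_graph E))) =
      {#complex_of_real (Nr - K - 1)#} + replicate_mset cR2 (complex_of_real r2) + replicate_mset cS2 (complex_of_real s2)"
    and d1: "real cR2 + real cS2 = Nr - 1" and d2: "real cR2 * r2 + real cS2 * s2 = - (Nr - K - 1)"
    and d3: "(Nr - K - 1)^2 + real cR2 * r2^2 + real cS2 * s2^2 = Nr * (Nr - K - 1)"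
    using srg_spec[OF srgB _ _ N0] Mu'1 muk2 unfolding matB r2_def s2_def D2_def Nr_def K'_def Mu'_def by auto
  have D2D: "D2 = D" unfolding D2_def D_def by (simp add: algebra_simps power2_eq_square)
  have D0: "D > 0" unfolding D_def using muk by (smt (verit) zero_le_power2)
  have r2s: "r2 = -1 - s" unfolding r2_def s_def D2D by (simp add: field_simps)
  have s2r: "s2 = -1 - r" unfolding s2_def r_def D2D by (simp add: field_simps)
  have rs_sum: "r + s = L - Mu" unfolding r_def s_def by (simp add: field_simps)
  have sD: "sqrt D * sqrt D = D" using D0 by simp
  have rs_prod: "r * s = - (K - Mu)"
  proof -
    have "r * s = ((L - Mu)^2 - sqrt D * sqrt D) / 4" unfolding r_def s_def
      by (simp add: field_simps power2_eq_square)
    also have "\<dots> = ((L - Mu)^2 - D) / 4" by (simp only: sD)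
    also have "\<dots> = - (K - Mu)" unfolding D_def by simp
    finally show ?thesis .
  qed
  have rgs: "r > s" unfolding r_def s_def using D0 by simp
  have rsneg: "r * s < 0" using rs_prod muk by simp
  have rpos: "r > 0"
  proof (rule ccontr)
    assume "\<not> r > 0"
    then have "r \<le> 0" "s \<le> 0" using rgs by auto
    then have "r * s \<ge> 0" by (simp add: mult_nonpos_nonpos)
    with rsneg show False by simp
  qed
  have sneg: "s < 0"
  proof (rule ccontr)
    assume "\<not> s < 0"
    then have "r \<ge> 0" "s \<ge> 0" using rgs by auto
    then have "r * s \<ge> 0" by simp
    with rsneg show False by simp
  qed
  have s1neg: "s < -1"
  proof -
    have "(1 + s) * (1 + r) = 1 + (r + s) + r * s" by (simp add: algebra_simps)
    also have "\<dots> = - (K' - Mu')" unfolding rs_sum rs_prod K'_def Mu'_def by simp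
    finally have "(1 + s) * (1 + r) < 0" using muk2 by simp
    then show ?thesis using rpos by (simp add: mult_less_0_iff)
  qed
  have cR2: "real cR2 = real cS" and cS2: "real cS2 = real cR"
  proof -
    have e: "real cR2 * s + real cS2 * r = - K" using d1 d2 unfolding r2s s2r by (simp add: algebra_simps)
    define x where "x = real cR2 - real cS"
    have "real cS2 - real cR = - x" using c1 d1 x_def by simp
    have "x * (s - r) = 0"
    proof -
      have "x * (s - r) = (real cR2 * s + real cS2 * r) - (real cR * r + real cS * s)
           - (real cS2 - real cR + x) * r" by (simp add: x_def algebra_simps)
      also have "\<dots> = 0" using e c2 \<open>real cS2 - real cR = - x\<close> by simp
      finally show ?thesis .
    qed
    then have "x = 0" using rgs by simp
    then show "real cR2 = real cS" "real cS2 = real cR" using x_def c1 d1 by auto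
  qed
  have en1: "energy N E = K + real cR * r - real cS * s"
    using energy_eq[OF sp1] K1 rpos sneg by simp
  have en2: "energy N (compl_graph E) = (Nr - K - 1) + real cS * (-1 - s) + real cR * (1 + r)"
    using energy_eq[OF sp2] K'1 rpos s1neg unfolding r2s s2r cR2 cS2 K'_def by simp
  have key: "energy N E = energy N (compl_graph E) \<longleftrightarrow> real cR = K"
  proof -
    have "energy N E - energy N (compl_graph E) = 2 * K - 2 * real cR"
      unfolding en1 en2 using c1 by (simp add: algebra_simps)
    then show ?thesis by linarith
  qed
  have crit: "real cR = K \<longleftrightarrow> K * (r + 1) + (Nr - 1 - K) * s = 0"
  proof -
    have cr: "real cR * (r - s) = - K - (Nr - 1) * s"
    proof -
      have "real cS = Nr - 1 - real cR" using c1 by simp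
      then have "real cS * s = (Nr - 1 - real cR) * s" by simp
      then have "real cS * s = Nr * s - s - real cR * s" by (simp add: algebra_simps)
      then show ?thesis using c2 by (simp add: algebra_simps)
    qed
    show ?thesis
    proof
      assume "real cR = K" then show "K * (r + 1) + (Nr - 1 - K) * s = 0" using cr by (simp add: algebra_simps)
    next
      assume "K * (r + 1) + (Nr - 1 - K) * s = 0"
      then have "K * (r - s) = real cR * (r - s)" using cr by (simp add: algebra_simps)
      then show "real cR = K" using rgs by simp
    qed
  qed
  have conf_suff: "conference_graph N E" if h1: "real cR = K" and h2: "real cS = real cR"
  proof -
    have NK: "Nr = 2 * K + 1" using c1 h1 h2 by simp
    have "K * (r + s) = - K" using c2 h1 h2 by (simp add: algebra_simps)
    then have "K * (r + s + 1) = 0" by (simp add: algebra_simps)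
    then have "r + s = -1" using K1 by simp
    then have LM: "L = Mu - 1" using rs_sum by simp
    have "K * K = 2 * Mu * K" using rel1 unfolding LM NK by (simp add: algebra_simps)
    then have KM: "K = 2 * Mu" using K1 by simp
    have ed: "e + 1 = d" using LM unfolding L_def Mu_def by linarith
    have kd: "k = 2 * d" using KM unfolding K_def Mu_def by linarith
    have Nd: "N = 4 * d + 1" using NK KM unfolding Nr_def Mu_def by linarith
    have d1: "d \<ge> 1" using Mu1 unfolding Mu_def by simp
    have "strongly_regular N E (4 * d + 1) (2 * d) (d - 1) d"
    proof -
      have q: "4 * d + 1 = N" "2 * d = k" "d - 1 = e" using Nd kd ed by auto
      show ?thesis using srg by (simp only: q)
    qed
    then show ?thesis unfolding conference_graph_def using d1 by blast
  qed
  have conf_nec: "real cR = K" if "conference_graph N E"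
  proof -
    from that obtain t where t1: "t \<ge> 1" and srg': "strongly_regular N E (4*t+1) (2*t) (t-1) t"
      unfolding conference_graph_def by blast
    from srg_unique[OF srg srg'] have eqs: "N = 4*t+1" "k = 2*t" "e = t - 1" "d = t" by auto
    have "L - Mu = -1" unfolding L_def Mu_def using eqs t1 by (simp add: of_nat_diff)
    then have "r + s + 1 = 0" using rs_sum by simp
    moreover have "K * (r + 1) + (Nr - 1 - K) * s = K * (r + s + 1)"
      unfolding K_def Nr_def using eqs by (simp add: algebra_simps)
    ultimately show ?thesis using crit by simp
  qed
  have oa_nec: "real cR = K" if n0: "n0 > 0" and m0: "m0 > 0" and oa: "has_OA_params N E n0 m0" for n0 m0
  proof -
    from oa obtain e0 where ie: "int e0 = int m0 ^ 2 - 3 * int m0 + int n0"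
      and srg2: "strongly_regular N E (n0^2) (m0*(n0-1)) e0 (m0*(m0-1))"
      unfolding has_OA_params_def by blast
    from srg_unique[OF srg srg2] have eqs: "N = n0^2" "k = m0*(n0-1)" "e = e0" "d = m0*(m0-1)" by auto
    have "real_of_int (int e0) = real_of_int (int m0 ^ 2 - 3 * int m0 + int n0)" using ie by simp
    then have Lr: "L = real m0 ^ 2 - 3 * real m0 + real n0" unfolding L_def eqs by simp
    have Kr: "K = real m0 * (real n0 - 1)" unfolding K_def eqs using n0 by (simp add: of_nat_diff)
    have Mr: "Mu = real m0 * (real m0 - 1)" unfolding Mu_def eqs using m0 by (simp add: of_nat_diff)
    have Nr2: "Nr = real n0 ^ 2" unfolding Nr_def eqs by simp
    have LM: "L - Mu = real n0 - 2 * real m0" unfolding Lr Mr by (simp add: power2_eq_square algebra_simps)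
    have KM: "K - Mu = real m0 * (real n0 - real m0)" unfolding Kr Mr by (simp add: algebra_simps)
    have rr: "r * r = (L - Mu) * r + (K - Mu)"
    proof -
      have "r * r = (r + s) * r - r * s" by (simp add: algebra_simps)
      then show ?thesis using rs_sum rs_prod by simp
    qed
    have "(r - (real n0 - real m0)) * (r + real m0) = r * r - (real n0 - 2 * real m0) * r - real m0 * (real n0 - real m0)"
      by (simp add: algebra_simps)
    also have "\<dots> = 0" using rr LM KM by simp
    finally have "(r - (real n0 - real m0)) * (r + real m0) = 0" .
    moreover have "r + real m0 > 0" using rpos by simp
    ultimately have rv: "r = real n0 - real m0" by simp
    have sv: "s = - real m0" using rs_sum LM rv by simp
    have "K * (r + 1) + (Nr - 1 - K) * s = 0"
      unfolding rv sv Kr Nr2 by (simp add: algebra_simps power2_eq_square)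
    then show ?thesis using crit by simp
  qed
  have oa_suff: "\<exists>n m. n > 0 \<and> m > 0 \<and> m \<notin> {n, n+1} \<and> has_OA_params N E n m"
    if h1: "real cR = K" and h2: "real cS \<noteq> real cR"
  proof -
    have "2 * (real cR * r + real cS * s) = (real cR + real cS) * (r + s) + (real cR - real cS) * (r - s)"
      by (simp add: algebra_simps)
    then have diff: "(real cR - real cS) * (r - s) = - 2 * K - (Nr - 1) * (L - Mu)"
      using c1 c2 rs_sum by simp
    have nz: "real cR - real cS \<noteq> 0" using h2 by simp
    have "r - s = (- 2 * K - (Nr - 1) * (L - Mu)) / (real cR - real cS)"
      using diff nz by (simp add: field_simps)
    also have "\<dots> \<in> \<rat>" unfolding K_def Nr_def L_def Mu_def by simp
    finally have qrs: "r - s \<in> \<rat>" .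
    have "r = ((L - Mu) + (r - s)) / 2" using rs_sum by simp
    also have "\<dots> \<in> \<rat>" using qrs unfolding L_def Mu_def by simp
    finally have qr: "r \<in> \<rat>" .
    have rr: "r * r = of_int (int e - int d) * r + of_int (int k - int d)"
    proof -
      have "r * r = (r + s) * r - r * s" by (simp add: algebra_simps)
      then show ?thesis using rs_sum rs_prod unfolding L_def Mu_def K_def by simp
    qed
    from rat_root_int[OF qr rr] obtain ri where ri: "r = of_int ri" by (auto elim: Ints_cases)
    define si where "si = int e - int d - ri"
    have si: "s = of_int si" unfolding si_def using rs_sum ri unfolding L_def Mu_def by simp
    have b: "(Nr - 1 - K) * s = - K * (r + 1)" using crit h1 by (simp add: algebra_simps)
    have a: "K - L - 1 = - ((r + 1) * (s + 1))"
    proof -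
      have "(r + 1) * (s + 1) = r * s + (r + s) + 1" by (simp add: algebra_simps)
      then show ?thesis using rs_sum rs_prod by simp
    qed
    have f2: "Mu * (Nr - K - 1) = K * (K - L - 1)" using E1' unfolding K'_def Mu'_def by (simp add: algebra_simps)
    have b': "Mu * ((Nr - 1 - K) * s) = Mu * (- K * (r + 1))" using b by simp
    have "K * (r + 1) * Mu = - (Mu * ((Nr - 1 - K) * s))" unfolding b' by (simp add: algebra_simps)
    also have "Mu * ((Nr - 1 - K) * s) = (Mu * (Nr - K - 1)) * s" by (simp add: algebra_simps)
    also have "\<dots> = K * (K - L - 1) * s" using f2 by simp
    also have "\<dots> = - (K * (r + 1) * (s * (s + 1)))" unfolding a by (simp add: algebra_simps)
    finally have "K * (r + 1) * Mu = K * (r + 1) * (s * (s + 1))" by simp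
    moreover have "K * (r + 1) > 0" using K1 rpos by simp
    ultimately have Ms: "Mu = s * (s + 1)" using K1 rpos by auto
    have si0: "si < 0" using sneg si by simp
    have ris: "ri - si > 0" using rgs ri si by simp
    define m0 where "m0 = nat (- si)"
    define n0 where "n0 = nat (ri - si)"
    have m0r: "real m0 = - s" unfolding m0_def si using si0 by simp
    have n0r: "real n0 = r - s" unfolding n0_def si ri using ris by simp
    have m0p: "m0 > 0" using m0r sneg by simp
    have mn: "m0 < n0" using m0r n0r rpos by simp
    have n0p: "n0 > 0" using mn by simp
    have sv: "s = - real m0" using m0r by simp
    have rv: "r = real n0 - real m0" using n0r m0r by simp
    have Mr: "Mu = real m0 * (real m0 - 1)" unfolding Ms sv by (simp add: algebra_simps)
    have Kr: "K = real m0 * (real n0 - 1)"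
    proof -
      have "K = Mu - r * s" using rs_prod by simp
      then show ?thesis unfolding Ms sv rv by (simp add: algebra_simps)
    qed
    have Lr: "L = real m0 ^ 2 - 3 * real m0 + real n0"
    proof -
      have "L = r + s + Mu" using rs_sum by simp
      then show ?thesis unfolding Ms sv rv by (simp add: algebra_simps power2_eq_square)
    qed
    have Nr2: "Nr = real n0 ^ 2"
    proof -
      have "(Nr - 1 - K) * real m0 = K * (r + 1)" using b unfolding sv by (simp add: algebra_simps)
      also have "\<dots> = real m0 * ((real n0 - 1) * (real n0 - real m0 + 1))"
        unfolding Kr rv by (simp add: algebra_simps)
      finally have "(Nr - 1 - K) * real m0 = ((real n0 - 1) * (real n0 - real m0 + 1)) * real m0"
        by (simp add: algebra_simps)
      then have "Nr - 1 - K = (real n0 - 1) * (real n0 - real m0 + 1)" using m0p by simp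
      then show ?thesis using Kr by (simp add: algebra_simps power2_eq_square)
    qed
    have Neq: "N = n0^2" using Nr2 unfolding Nr_def by (metis of_nat_eq_iff of_nat_power)
    have n01: "1 \<le> n0" and m01: "1 \<le> m0" using n0p m0p by auto
    have "real k = real (m0 * (n0 - 1))" using Kr n01 unfolding K_def by (simp add: of_nat_diff)
    then have keq: "k = m0 * (n0 - 1)" by (simp only: of_nat_eq_iff)
    have "real d = real (m0 * (m0 - 1))" using Mr m01 unfolding Mu_def by (simp add: of_nat_diff)
    then have deq: "d = m0 * (m0 - 1)" by (simp only: of_nat_eq_iff)
    have "real_of_int (int e) = real_of_int (int m0 ^ 2 - 3 * int m0 + int n0)" using Lr unfolding L_def by simp
    then have ieq: "int e = int m0 ^ 2 - 3 * int m0 + int n0" by (simp only: of_int_eq_iff)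
    have "strongly_regular N E (n0^2) (m0*(n0-1)) e (m0*(m0-1))"
      using srg unfolding Neq[symmetric] keq[symmetric] deq[symmetric] .
    then have "has_OA_params N E n0 m0" unfolding has_OA_params_def using ieq by blast
    then show ?thesis using n0p m0p mn by (intro exI[of _ n0] exI[of _ m0]) auto
  qed
  have iso: "\<not> isospectral N E (compl_graph E)" if h1: "real cR = K" and nc: "\<not> conference_graph N E"
  proof
    assume "isospectral N E (compl_graph E)"
    then have "adj_spectrum N E = adj_spectrum N (compl_graph E)" unfolding isospectral_def .
    then have "complex_of_real (K^2 + real cR * r^2 + real cS * s^2) =
       complex_of_real ((Nr - K - 1)^2 + real cR2 * r2^2 + real cS2 * s2^2)"
      using sumsq_eq[OF sp1] sumsq_eq[OF sp2] by simp
    then have "Nr * K = Nr * (Nr - K - 1)" using c3 d3 by (simp only: of_real_eq_iff)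
    then have "K = Nr - K - 1" using N0 unfolding Nr_def by simp
    then have "real cS = real cR" using c1 h1 by simp
    then have "conference_graph N E" using conf_suff h1 by simp
    with nc show False by simp
  qed
  have main: "real cR = K \<longleftrightarrow> conference_graph N E \<or> (\<exists>n m. n > 0 \<and> m > 0 \<and> m \<notin> {n, n+1} \<and> has_OA_params N E n m)"
  proof
    assume h: "real cR = K"
    show "conference_graph N E \<or> (\<exists>n m. n > 0 \<and> m > 0 \<and> m \<notin> {n, n+1} \<and> has_OA_params N E n m)"
    proof (cases "real cS = real cR")
      case True then show ?thesis using conf_suff h by simp
    next
      case False then show ?thesis using oa_suff h by simp
    qed
  next
    assume "conference_graph N E \<or> (\<exists>n m. n > 0 \<and> m > 0 \<and> m \<notin> {n, n+1} \<and> has_OA_params N E n m)"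
    then show "real cR = K" using conf_nec oa_nec by blast
  qed
  show ?thesis using key main iso by blast
qed

end
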